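(* Let $L\subseteq Q$ be an extension of Lie algebras with $L$ semiprime and $Q$ an algebra of quotients of $L$. Then $[Q,Q]$ is an algebra of quotients of $[L,L]$.
   Context: Lie algebras over a commutative unital ring $\Phi$. $[L,L]$ is the span of all brackets of elements of $L$. $\mathrm{Ann}_L(X)=\{a\in L:[a,x]=0\ \forall x\in X\}$. $L$ is semiprime if $[I,I]\ne 0$ for every nonzero ideal $I$. For a Lie subalgebra $L\subseteq Q$, $Q$ is an algebra of quotients of $L$ if for every nonzero $q\in Q$ there is an ideal $I$ of $L$ with $\mathrm{Ann}_L(I)=0$ and $0\ne[I,q]\subseteq L$. *)

theory Defs
  imports Main
begin

text \<open>Lie algebras over a commutative unital ring 'r, represented on a carrier set
 inside an ambient additive group 'a, with scalar multiplication sm and bracket br.\<close>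

definition lie_algebra ::
  "('r::comm_ring_1 \<Rightarrow> 'a::ab_group_add \<Rightarrow> 'a) \<Rightarrow> ('a \<Rightarrow> 'a \<Rightarrow> 'a) \<Rightarrow> 'a set \<Rightarrow> bool" where
  "lie_algebra sm br Q \<longleftrightarrow>
     0 \<in> Q \<and> (\<forall>x\<in>Q. \<forall>y\<in>Q. x + y \<in> Q) \<and> (\<forall>x\<in>Q. - x \<in> Q) \<and>
     (\<forall>r. \<forall>x\<in>Q. sm r x \<in> Q) \<and> (\<forall>x\<in>Q. \<forall>y\<in>Q. br x y \<in> Q) \<and>
     (\<forall>r. \<forall>x\<in>Q. \<forall>y\<in>Q. sm r (x + y) = sm r x + sm r y) \<and>
     (\<forall>r s. \<forall>x\<in>Q. sm (r + s) x = sm r x + sm s x) \<and>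
     (\<forall>r s. \<forall>x\<in>Q. sm (r * s) x = sm r (sm s x)) \<and>
     (\<forall>x\<in>Q. sm 1 x = x) \<and>
     (\<forall>x\<in>Q. \<forall>y\<in>Q. \<forall>z\<in>Q. br (x + y) z = br x z + br y z) \<and>
     (\<forall>x\<in>Q. \<forall>y\<in>Q. \<forall>z\<in>Q. br x (y + z) = br x y + br x z) \<and>
     (\<forall>r. \<forall>x\<in>Q. \<forall>y\<in>Q. br (sm r x) y = sm r (br x y)) \<and>
     (\<forall>r. \<forall>x\<in>Q. \<forall>y\<in>Q. br x (sm r y) = sm r (br x y)) \<and>
     (\<forall>x\<in>Q. br x x = 0) \<and>
     (\<forall>x\<in>Q. \<forall>y\<in>Q. \<forall>z\<in>Q. br x (br y z) + br y (br z x) + br z (br x y) = 0)"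

definition lie_subalgebra ::
  "('r::comm_ring_1 \<Rightarrow> 'a::ab_group_add \<Rightarrow> 'a) \<Rightarrow> ('a \<Rightarrow> 'a \<Rightarrow> 'a) \<Rightarrow> 'a set \<Rightarrow> 'a set \<Rightarrow> bool" where
  "lie_subalgebra sm br L Q \<longleftrightarrow> L \<subseteq> Q \<and> lie_algebra sm br L"

inductive_set span_mod :: "('r \<Rightarrow> 'a::ab_group_add \<Rightarrow> 'a) \<Rightarrow> 'a set \<Rightarrow> 'a set"
  for sm :: "'r \<Rightarrow> 'a \<Rightarrow> 'a" and S :: "'a set" where
  base: "x \<in> S \<Longrightarrow> x \<in> span_mod sm S"
| zero: "0 \<in> span_mod sm S"
| add: "x \<in> span_mod sm S \<Longrightarrow> y \<in> span_mod sm S \<Longrightarrow> x + y \<in> span_mod sm S"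
| smult: "x \<in> span_mod sm S \<Longrightarrow> sm r x \<in> span_mod sm S"

definition brk_span ::
  "('r \<Rightarrow> 'a::ab_group_add \<Rightarrow> 'a) \<Rightarrow> ('a \<Rightarrow> 'a \<Rightarrow> 'a) \<Rightarrow> 'a set \<Rightarrow> 'a set \<Rightarrow> 'a set" where
  "brk_span sm br X Y = span_mod sm {br x y | x y. x \<in> X \<and> y \<in> Y}"

definition lie_ideal ::
  "('r \<Rightarrow> 'a::ab_group_add \<Rightarrow> 'a) \<Rightarrow> ('a \<Rightarrow> 'a \<Rightarrow> 'a) \<Rightarrow> 'a set \<Rightarrow> 'a set \<Rightarrow> bool" where
  "lie_ideal sm br I L \<longleftrightarrow> I \<subseteq> L \<and> 0 \<in> I \<and> (\<forall>x\<in>I. \<forall>y\<in>I. x + y \<in> I) \<and>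
     (\<forall>r. \<forall>x\<in>I. sm r x \<in> I) \<and> (\<forall>x\<in>I. \<forall>a\<in>L. br x a \<in> I \<and> br a x \<in> I)"

definition ann :: "('a \<Rightarrow> 'a \<Rightarrow> 'a::zero) \<Rightarrow> 'a set \<Rightarrow> 'a set \<Rightarrow> 'a set" where
  "ann br L X = {a \<in> L. \<forall>x\<in>X. br a x = 0}"

definition semiprime ::
  "('r \<Rightarrow> 'a::ab_group_add \<Rightarrow> 'a) \<Rightarrow> ('a \<Rightarrow> 'a \<Rightarrow> 'a) \<Rightarrow> 'a set \<Rightarrow> bool" where
  "semiprime sm br L \<longleftrightarrow>
     (\<forall>I. lie_ideal sm br I L \<and> I \<noteq> {0} \<longrightarrow> brk_span sm br I I \<noteq> {0})"

definition algebra_of_quotients ::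
  "('r::comm_ring_1 \<Rightarrow> 'a::ab_group_add \<Rightarrow> 'a) \<Rightarrow> ('a \<Rightarrow> 'a \<Rightarrow> 'a) \<Rightarrow> 'a set \<Rightarrow> 'a set \<Rightarrow> bool" where
  "algebra_of_quotients sm br L Q \<longleftrightarrow>
     lie_algebra sm br Q \<and> lie_subalgebra sm br L Q \<and>
     (\<forall>q\<in>Q. q \<noteq> 0 \<longrightarrow>
        (\<exists>I. lie_ideal sm br I L \<and> ann br L I = {0} \<and>
             {br x q | x. x \<in> I} \<noteq> {0} \<and> {br x q | x. x \<in> I} \<subseteq> L))"

end

theory Submission
  imports Defs
begin


context
  fixes sm :: "'r::comm_ring_1 \<Rightarrow> 'a::ab_group_add \<Rightarrow> 'a"
    and br :: "'a \<Rightarrow> 'a \<Rightarrow> 'a"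
    and Q :: "'a set"
  assumes LA: "lie_algebra sm br Q"
begin

lemma la_zero: "0 \<in> Q" using LA by (simp add: lie_algebra_def)
lemma la_add: "x \<in> Q \<Longrightarrow> y \<in> Q \<Longrightarrow> x + y \<in> Q" using LA by (simp add: lie_algebra_def)
lemma la_sm: "x \<in> Q \<Longrightarrow> sm r x \<in> Q" using LA by (simp add: lie_algebra_def)
lemma la_br: "x \<in> Q \<Longrightarrow> y \<in> Q \<Longrightarrow> br x y \<in> Q" using LA by (simp add: lie_algebra_def)
lemma la_add_sm: "x \<in> Q \<Longrightarrow> sm (r + s) x = sm r x + sm s x" using LA by (simp add: lie_algebra_def)
lemma la_sm_add: "x \<in> Q \<Longrightarrow> y \<in> Q \<Longrightarrow> sm r (x + y) = sm r x + sm r y" using LA by (simp add: lie_algebra_def)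
lemma la_one: "x \<in> Q \<Longrightarrow> sm 1 x = x" using LA by (simp add: lie_algebra_def)
lemma la_brL: "x \<in> Q \<Longrightarrow> y \<in> Q \<Longrightarrow> z \<in> Q \<Longrightarrow> br (x + y) z = br x z + br y z" using LA by (simp add: lie_algebra_def)
lemma la_brR: "x \<in> Q \<Longrightarrow> y \<in> Q \<Longrightarrow> z \<in> Q \<Longrightarrow> br x (y + z) = br x y + br x z" using LA by (simp add: lie_algebra_def)
lemma la_brsmL: "x \<in> Q \<Longrightarrow> y \<in> Q \<Longrightarrow> br (sm r x) y = sm r (br x y)" using LA by (simp add: lie_algebra_def)
lemma la_alt: "x \<in> Q \<Longrightarrow> br x x = 0" using LA by (simp add: lie_algebra_def)
lemma la_jac: "x \<in> Q \<Longrightarrow> y \<in> Q \<Longrightarrow> z \<in> Q \<Longrightarrow> br x (br y z) + br y (br z x) + br z (br x y) = 0"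
  using LA by (simp add: lie_algebra_def)

lemma la_br0L: "x \<in> Q \<Longrightarrow> br 0 x = 0"
  using la_brL[of 0 0 x] la_zero by simp
lemma la_br0R: "x \<in> Q \<Longrightarrow> br x 0 = 0"
  using la_brR[of x 0 0] la_zero by simp
lemma la_sm0: "sm r 0 = 0"
  using la_sm_add[of 0 0 r] la_zero by simp
lemma la_0sm: "x \<in> Q \<Longrightarrow> sm 0 x = 0"
  using la_add_sm[of x 0 0] by simp
lemma la_negsm: "x \<in> Q \<Longrightarrow> sm (-1) x = - x"
  using la_add_sm[of x "-1" 1] la_one[of x] la_0sm[of x] by (simp add: eq_neg_iff_add_eq_0)
lemma la_neg: "x \<in> Q \<Longrightarrow> - x \<in> Q"
  using la_negsm la_sm by metis
lemma la_anti: "x \<in> Q \<Longrightarrow> y \<in> Q \<Longrightarrow> br x y = - br y x"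
proof -
  assume x: "x \<in> Q" and y: "y \<in> Q"
  have "0 = br (x + y) (x + y)" using la_alt la_add x y by simp
  also have "\<dots> = br x x + br x y + (br y x + br y y)"
    using x y la_brL la_brR la_add by simp
  finally show ?thesis using la_alt x y by (simp add: eq_neg_iff_add_eq_0)
qed
lemma la_ident: "x \<in> Q \<Longrightarrow> y \<in> Q \<Longrightarrow> z \<in> Q \<Longrightarrow> br (br x y) z = br x (br y z) - br y (br x z)"
proof -
  assume x: "x \<in> Q" and y: "y \<in> Q" and z: "z \<in> Q"
  have j: "br x (br y z) + br y (br z x) + br z (br x y) = 0" using la_jac x y z by simp
  have a1: "br z (br x y) = - br (br x y) z" using la_anti[of z "br x y"] la_br[of x y] x y z by simp
  have a2: "br z x = - br x z" using la_anti[of z x] x z by simp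
  have a3: "br y (- br x z) = - br y (br x z)"
  proof -
    have "br y (br x z) + br y (- br x z) = 0"
      using la_brR[of y "br x z" "- br x z"] la_br[of x z] la_neg[of "br x z"] x y z la_br0R[of y] by simp
    then show ?thesis by (metis add.commute eq_neg_iff_add_eq_0)
  qed
  from j a1 a2 a3 show ?thesis by (simp add: algebra_simps)
qed

lemma span_sub: "S \<subseteq> Q \<Longrightarrow> span_mod sm S \<subseteq> Q"
proof
  fix x assume S: "S \<subseteq> Q" and x: "x \<in> span_mod sm S"
  from x show "x \<in> Q"
    by (induction rule: span_mod.induct) (use S in \<open>auto intro: la_zero la_add la_sm\<close>)
qed

lemma span_neg: "S \<subseteq> Q \<Longrightarrow> x \<in> span_mod sm S \<Longrightarrow> - x \<in> span_mod sm S"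
  using span_sub la_negsm span_mod.smult by (metis subsetD)

lemma span_diff: "S \<subseteq> Q \<Longrightarrow> x \<in> span_mod sm S \<Longrightarrow> y \<in> span_mod sm S \<Longrightarrow> x - y \<in> span_mod sm S"
  using span_neg span_mod.add by (metis diff_conv_add_uminus)

lemma brk_sub: "X \<subseteq> Q \<Longrightarrow> Y \<subseteq> Q \<Longrightarrow> brk_span sm br X Y \<subseteq> Q"
  unfolding brk_span_def by (rule span_sub) (auto intro: la_br)

lemma ideal_neg: "lie_ideal sm br I Q \<Longrightarrow> x \<in> I \<Longrightarrow> - x \<in> I"
  unfolding lie_ideal_def using la_negsm by (metis subsetD)

lemma la_subset: "B \<subseteq> Q \<Longrightarrow> 0 \<in> B \<Longrightarrow> (\<forall>x\<in>B. \<forall>y\<in>B. x + y \<in> B) \<Longrightarrow> (\<forall>x\<in>B. - x \<in> B)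
  \<Longrightarrow> (\<forall>r. \<forall>x\<in>B. sm r x \<in> B) \<Longrightarrow> (\<forall>x\<in>B. \<forall>y\<in>B. br x y \<in> B) \<Longrightarrow> lie_algebra sm br B"
  using LA unfolding lie_algebra_def by (simp add: subset_iff)

lemma brk_la: "lie_algebra sm br (brk_span sm br Q Q)"
proof -
  have s: "brk_span sm br Q Q \<subseteq> Q" by (rule brk_sub) auto
  have b: "{br x y |x y. x \<in> Q \<and> y \<in> Q} \<subseteq> Q" by (auto intro: la_br)
  show ?thesis
  proof (rule la_subset[OF s])
    show "\<forall>x\<in>brk_span sm br Q Q. \<forall>y\<in>brk_span sm br Q Q. br x y \<in> brk_span sm br Q Q"
      using s unfolding brk_span_def by (blast intro: span_mod.base)
    show "0 \<in> brk_span sm br Q Q" unfolding brk_span_def by (rule span_mod.zero)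
    show "\<forall>x\<in>brk_span sm br Q Q. \<forall>y\<in>brk_span sm br Q Q. x + y \<in> brk_span sm br Q Q"
      unfolding brk_span_def by (blast intro: span_mod.add)
    show "\<forall>r. \<forall>x\<in>brk_span sm br Q Q. sm r x \<in> brk_span sm br Q Q"
      unfolding brk_span_def by (blast intro: span_mod.smult)
    show "\<forall>x\<in>brk_span sm br Q Q. - x \<in> brk_span sm br Q Q"
      unfolding brk_span_def using span_neg[OF b] by blast
  qed
qed

lemma ann_ideal: assumes J: "lie_ideal sm br J Q" shows "lie_ideal sm br (ann br Q J) Q"
proof -
  have JQ: "J \<subseteq> Q" using J by (simp add: lie_ideal_def)
  have h1: "br (br k a) x = 0" if "k \<in> ann br Q J" "a \<in> Q" "x \<in> J" for k a x
  proof -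
    have k: "k \<in> Q" "\<forall>x\<in>J. br k x = 0" using that by (auto simp: ann_def)
    have "br a x \<in> J" using J that by (simp add: lie_ideal_def)
    then show ?thesis using la_ident[of k a x] k that JQ la_br0R by auto
  qed
  have h2: "br (br a k) x = 0" if "k \<in> ann br Q J" "a \<in> Q" "x \<in> J" for k a x
  proof -
    have k: "k \<in> Q" using that by (auto simp: ann_def)
    have xQ: "x \<in> Q" using that JQ by auto
    have "br (br a k) x = br (- br k a) x" using la_anti[of a k] k that by simp
    also have "\<dots> = - br (br k a) x"
      using la_brL[of "- br k a" "br k a" x] la_br[of k a] la_neg[of "br k a"] k that xQ la_br0L[of x]
      by (simp add: eq_neg_iff_add_eq_0)
    finally show ?thesis using h1[OF that] by simp
  qed
  have h3: "br (k1 + k2) x = 0" if "k1 \<in> ann br Q J" "k2 \<in> ann br Q J" "x \<in> J" for k1 k2 x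
  proof -
    have "k1 \<in> Q" "k2 \<in> Q" "x \<in> Q" "br k1 x = 0" "br k2 x = 0" using that JQ by (auto simp: ann_def)
    then show ?thesis using la_brL[of k1 k2 x] by simp
  qed
  have h4: "br (sm r k) x = 0" if "k \<in> ann br Q J" "x \<in> J" for k x r
  proof -
    have "k \<in> Q" "x \<in> Q" "br k x = 0" using that JQ by (auto simp: ann_def)
    then show ?thesis using la_brsmL[of k x r] la_sm0[of r] by simp
  qed
  have A: "ann br Q J \<subseteq> Q" by (auto simp: ann_def)
  have "0 \<in> ann br Q J" using la_zero la_br0L JQ by (auto simp: ann_def)
  moreover have "\<forall>x\<in>ann br Q J. \<forall>y\<in>ann br Q J. x + y \<in> ann br Q J"
    using h3 la_add A unfolding ann_def by blast
  moreover have "\<forall>r. \<forall>x\<in>ann br Q J. sm r x \<in> ann br Q J"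
    using h4 la_sm A unfolding ann_def by blast
  moreover have "\<forall>x\<in>ann br Q J. \<forall>a\<in>Q. br x a \<in> ann br Q J \<and> br a x \<in> ann br Q J"
    using h1 h2 la_br A unfolding ann_def by blast
  ultimately show ?thesis unfolding lie_ideal_def using A by blast
qed

lemma ideal_int: "lie_ideal sm br I Q \<Longrightarrow> lie_ideal sm br J Q \<Longrightarrow> lie_ideal sm br (I \<inter> J) Q"
  unfolding lie_ideal_def by auto

lemma sp_zero: assumes "semiprime sm br Q" "lie_ideal sm br N Q" "\<forall>x\<in>N. \<forall>y\<in>N. br x y = 0"
  shows "N = {0}"
proof -
  have "x = 0" if "x \<in> brk_span sm br N N" for x
    using that unfolding brk_span_def
  proof (induction rule: span_mod.induct)
    case (base x) then show ?case using assms(3) by blast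
  next
    case zero then show ?case by simp
  next
    case (add x y) then show ?case by simp
  next
    case (smult x r) then show ?case using la_sm0 by simp
  qed
  then have "brk_span sm br N N = {0}" unfolding brk_span_def using span_mod.zero by blast
  then show ?thesis using assms(1,2) unfolding semiprime_def by blast
qed

end

theorem mainTheorem6:
  fixes sm :: "'r::comm_ring_1 \<Rightarrow> 'a::ab_group_add \<Rightarrow> 'a"
    and br :: "'a \<Rightarrow> 'a \<Rightarrow> 'a"
    and L Q :: "'a set"
  assumes "lie_algebra sm br Q"
    and "lie_subalgebra sm br L Q"
    and "semiprime sm br L"
    and "algebra_of_quotients sm br L Q"
  shows "algebra_of_quotients sm br (brk_span sm br L L) (brk_span sm br Q Q)"
proof -
  note QA = assms(1)
  have LQ: "L \<subseteq> Q" and LA: "lie_algebra sm br L" using assms(2) by (auto simp: lie_subalgebra_def)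
  have SP: "semiprime sm br L" by fact
  have quot: "\<And>q. q \<in> Q \<Longrightarrow> q \<noteq> 0 \<Longrightarrow> \<exists>I. lie_ideal sm br I L \<and> ann br L I = {0} \<and>
             {br x q | x. x \<in> I} \<noteq> {0} \<and> {br x q | x. x \<in> I} \<subseteq> L"
    using assms(4) unfolding algebra_of_quotients_def by blast
  have QQA: "lie_algebra sm br (brk_span sm br Q Q)" by (rule brk_la[OF QA])
  have LLA: "lie_algebra sm br (brk_span sm br L L)" by (rule brk_la[OF LA])
  have LLsub: "brk_span sm br L L \<subseteq> L" by (rule brk_sub[OF LA]) auto
  have QQsub: "brk_span sm br Q Q \<subseteq> Q" by (rule brk_sub[OF QA]) auto
  have span_mono: "span_mod sm S \<subseteq> span_mod sm T" if "S \<subseteq> T" for S T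
  proof
    fix x assume "x \<in> span_mod sm S"
    then show "x \<in> span_mod sm T"
      by (induction rule: span_mod.induct) (use that in \<open>auto intro: span_mod.intros\<close>)
  qed
  have LLQQ: "brk_span sm br L L \<subseteq> brk_span sm br Q Q"
    unfolding brk_span_def by (rule span_mono) (use LQ in blast)
  have main: "\<exists>I. lie_ideal sm br I (brk_span sm br L L) \<and> ann br (brk_span sm br L L) I = {0} \<and>
             {br x q | x. x \<in> I} \<noteq> {0} \<and> {br x q | x. x \<in> I} \<subseteq> brk_span sm br L L"
    if qQQ: "q \<in> brk_span sm br Q Q" and q0: "q \<noteq> 0" for q
  proof -
    have qQ: "q \<in> Q" using qQQ QQsub by blast
    obtain I where I: "lie_ideal sm br I L" "ann br L I = {0}"
      "{br x q | x. x \<in> I} \<subseteq> L" using quot[OF qQ q0] by blast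
    have IL: "I \<subseteq> L" using I(1) by (simp add: lie_ideal_def)
    have Iq: "br x q \<in> L" if "x \<in> I" for x using I(3) that by blast
    have Ibr: "br x a \<in> I" "br a x \<in> I" if "x \<in> I" "a \<in> L" for x a
      using I(1) that by (auto simp: lie_ideal_def)
    define B where "B = {br x y |x y. x \<in> I \<and> y \<in> I}"
    define J where "J = span_mod sm B"
    have Jbase: "br x y \<in> J" if "x \<in> I" "y \<in> I" for x y
      unfolding J_def B_def using that by (blast intro: span_mod.base)
    have Bsub: "B \<subseteq> L" unfolding B_def using IL la_br[OF LA] by blast
    have JL: "J \<subseteq> L" unfolding J_def by (rule span_sub[OF LA Bsub])
    have Jadd: "x + y \<in> J" if "x \<in> J" "y \<in> J" for x y
      using that unfolding J_def by (rule span_mod.add)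
    have Jsm: "sm r x \<in> J" if "x \<in> J" for x r
      using that unfolding J_def by (rule span_mod.smult)
    have Jneg: "- x \<in> J" if "x \<in> J" for x
      using that unfolding J_def by (rule span_neg[OF LA Bsub])
    have J0: "0 \<in> J" unfolding J_def by (rule span_mod.zero)
    have JbrR: "br z a \<in> J" if "z \<in> J" "a \<in> L" for z a
    proof -
    have zB: "z \<in> span_mod sm B" using that(1) J_def by simp
    from zB show ?thesis
    proof (induction rule: span_mod.induct)
      case (base w)
      then obtain x y where xy: "w = br x y" "x \<in> I" "y \<in> I" unfolding B_def by blast
      have e: "br (br x y) a = br x (br y a) - br y (br x a)"
        using la_ident[OF LA] xy IL that(2) by blast
      have m1: "br x (br y a) \<in> J" and m2: "br y (br x a) \<in> J"
        using Jbase Ibr xy that(2) by auto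
      have "br x (br y a) + - br y (br x a) \<in> J" by (rule Jadd[OF m1 Jneg[OF m2]])
      then show ?case unfolding xy(1) e by (simp only: diff_conv_add_uminus)
    next
      case zero then show ?case using la_br0L[OF LA] that(2) J0 by simp
    next
      case (add x y)
      have "x \<in> L" "y \<in> L" using add.hyps JL J_def by auto
      then show ?case using la_brL[OF LA, of x y a] that(2) add.IH Jadd by simp
    next
      case (smult x r)
      have "x \<in> L" using smult.hyps JL J_def by auto
      then show ?case using la_brsmL[OF LA, of x a r] that(2) smult.IH Jsm by simp
    qed
    qed
    have JbrL: "br a z \<in> J" if "z \<in> J" "a \<in> L" for z a
      using la_anti[OF LA, of a z] JbrR[OF that] Jneg JL that by auto
    have Jideal: "lie_ideal sm br J L"
      unfolding lie_ideal_def by (simp add: JL J0 Jadd Jsm JbrR JbrL)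
    define K where "K = ann br L J"
    have Kideal: "lie_ideal sm br K L" unfolding K_def by (rule ann_ideal[OF LA Jideal])
    have KL: "K \<subseteq> L" unfolding K_def ann_def by blast
    have Kz: "br k x = 0" if "k \<in> K" "x \<in> J" for k x using that unfolding K_def ann_def by blast
    have M0: "J \<inter> K = {0}"
    proof (rule sp_zero[OF LA SP ideal_int[OF LA Jideal Kideal]])
      show "\<forall>x\<in>J \<inter> K. \<forall>y\<in>J \<inter> K. br x y = 0" using Kz by blast
    qed
    have N0: "I \<inter> K = {0}"
    proof (rule sp_zero[OF LA SP ideal_int[OF LA I(1) Kideal]])
      show "\<forall>x\<in>I \<inter> K. \<forall>y\<in>I \<inter> K. br x y = 0"
      proof (intro ballI)
        fix x y assume "x \<in> I \<inter> K" "y \<in> I \<inter> K"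
        then have "br x y \<in> J" "br x y \<in> K" using Jbase Kideal IL unfolding lie_ideal_def by auto
        then show "br x y = 0" using M0 by blast
      qed
    qed
    have annJ: "ann br L J = {0}"
    proof -
      have "k = 0" if "k \<in> K" for k
      proof -
        have "br k x = 0" if "x \<in> I" for x
        proof -
          have kL: "k \<in> L" using \<open>k \<in> K\<close> KL by blast
          have xL: "x \<in> L" using that IL by blast
          have "br k x \<in> K" using Kideal \<open>k \<in> K\<close> xL unfolding lie_ideal_def by blast
          moreover have "br k x = - br x k" using la_anti[OF LA kL xL] .
          moreover have "- br x k \<in> I" using ideal_neg[OF LA I(1)] Ibr(1)[OF that kL] by blast
          ultimately have "br k x \<in> I \<inter> K" by simp
          then show ?thesis using N0 by blast
        qed
        then have "k \<in> ann br L I" using \<open>k \<in> K\<close> KL unfolding ann_def by blast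
        then show ?thesis using I(2) by blast
      qed
      moreover have "0 \<in> K" using Kideal unfolding lie_ideal_def by blast
      ultimately show ?thesis unfolding K_def by blast
    qed
    have Jq: "br z q \<in> brk_span sm br L L" if "z \<in> J" for z
    proof -
    have zB: "z \<in> span_mod sm B" using that(1) J_def by simp
    from zB show ?thesis
    proof (induction rule: span_mod.induct)
      case (base w)
      then obtain x y where xy: "w = br x y" "x \<in> I" "y \<in> I" unfolding B_def by blast
      have xQ: "x \<in> Q" "y \<in> Q" using xy IL LQ by auto
      have "br (br x y) q = br x (br y q) - br y (br x q)"
        using la_ident[OF QA] xQ qQ by blast
      moreover have "br x (br y q) \<in> brk_span sm br L L" "br y (br x q) \<in> brk_span sm br L L"
        using Iq xy IL unfolding brk_span_def by (blast intro: span_mod.base)+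
      moreover have BL: "{br x y |x y. x \<in> L \<and> y \<in> L} \<subseteq> L" using la_br[OF LA] by blast
      ultimately show ?case using span_diff[OF LA BL] xy unfolding brk_span_def by simp
    next
      case zero then show ?case using la_br0L[OF QA qQ] span_mod.zero unfolding brk_span_def by simp
    next
      case (add x y)
      have "x \<in> Q" "y \<in> Q" using add.hyps JL LQ J_def by auto
      then show ?case using la_brL[OF QA, of x y q] qQ add.IH span_mod.add unfolding brk_span_def by simp
    next
      case (smult x r)
      have "x \<in> Q" using smult.hyps JL LQ J_def by auto
      then show ?case using la_brsmL[OF QA, of x q r] qQ smult.IH span_mod.smult unfolding brk_span_def by simp
    qed
    qed
    have Jnz: "\<exists>z\<in>J. br z q \<noteq> 0"
    proof (rule ccontr)
      assume "\<not> (\<exists>z\<in>J. br z q \<noteq> 0)"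
      then have Z: "br z q = 0" if "z \<in> J" for z using that by blast
      obtain I' where I': "lie_ideal sm br I' L" "{br x q | x. x \<in> I'} \<noteq> {0}"
        "{br x q | x. x \<in> I'} \<subseteq> L" using quot[OF qQ q0] by blast
      have "br y q = 0" if y: "y \<in> I'" for y
      proof -
        have yL: "y \<in> L" using I'(1) y unfolding lie_ideal_def by blast
        have yqL: "br y q \<in> L" using I'(3) y by blast
        have "br (br y q) x = 0" if x: "x \<in> J" for x
        proof -
          have xL: "x \<in> L" using x JL by blast
          have "br (br x y) q = br x (br y q) - br y (br x q)"
            using la_ident[OF QA] xL yL LQ qQ by blast
          moreover have "br (br x y) q = 0" using Z JbrR[OF x yL] by blast
          moreover have "br y (br x q) = 0" using Z[OF x] la_br0R[OF QA] yL LQ by auto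
          ultimately have "br x (br y q) = 0" by simp
          then show ?thesis using la_anti[OF LA yqL xL] by simp
        qed
        then have "br y q \<in> ann br L J" using yqL unfolding ann_def by blast
        then show ?thesis using annJ by blast
      qed
      then have sub0: "{br x q | x. x \<in> I'} \<subseteq> {0}" by blast
      moreover have "0 \<in> I'" using I'(1) unfolding lie_ideal_def by blast
      moreover have e0: "br 0 q = 0" using la_br0L[OF QA qQ] .
      ultimately have "0 \<in> {br x q | x. x \<in> I'}" by (metis (mono_tags, lifting) mem_Collect_eq)
      then have "{0} \<subseteq> {br x q | x. x \<in> I'}" by (simp only: insert_subset empty_subsetI simp_thms)
      with \<open>{br x q | x. x \<in> I'} \<subseteq> {0}\<close> have "{br x q | x. x \<in> I'} = {0}" by (rule subset_antisym)
      then show False using I'(2) by blast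
    qed
    have JLL: "J \<subseteq> brk_span sm br L L"
      unfolding J_def B_def brk_span_def by (rule span_mono) (use IL in blast)
    have "lie_ideal sm br J (brk_span sm br L L)"
      using Jideal JLL LLsub unfolding lie_ideal_def by blast
    moreover have "ann br (brk_span sm br L L) J = {0}"
    proof
      show "ann br (brk_span sm br L L) J \<subseteq> {0}" using annJ LLsub unfolding ann_def by blast
      show "{0} \<subseteq> ann br (brk_span sm br L L) J"
        using la_br0L[OF LA] JL span_mod.zero unfolding ann_def brk_span_def by blast
    qed
    moreover have "{br x q | x. x \<in> J} \<noteq> {0}" using Jnz by blast
    moreover have "{br x q | x. x \<in> J} \<subseteq> brk_span sm br L L" using Jq by blast
    ultimately show ?thesis by blast
  qed
  show ?thesis
    unfolding algebra_of_quotients_def lie_subalgebra_def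
    using QQA LLQQ LLA main by blast
qed

end
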